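(* Let $\alpha,\beta,\gamma\in\mathbb{Z}[i]$ satisfy $\alpha^2+i\beta^2+\gamma^2=0$, $\alpha\beta\gamma\neq0$, $\gcd(\alpha,\beta)\in U$, and suppose $\beta\equiv 0\pmod{(1+i)^2}$. Then, after multiplying $\alpha,\beta,\gamma$ by suitable units and possibly interchanging the first and third coordinates, one obtains $(X,Y,Z)$ with $X^2+iY^2=Z^2$, $X,Z\in O^I$, $Y=(1+i)^{2+a_1}p_2^{a_2}\cdots p_m^{a_m}$ (integers $a_j\ge0$, $p_j$ distinct Gaussian primes in $O^I$), $\gcd(X,Y)\in U$, $XYZ\neq 0$. Conversely, if $(X,Y,Z)$ satisfies $X^2+iY^2=Z^2$, $\gcd(X,Y)\in U$, $XYZ\ne0$, then $(X,Y,iZ)$ is a solution of $X^2+iY^2+Z^2=0$ with the same conditions.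
   Context: $\mathbb{Z}[i]$ is the ring of Gaussian integers, $U=\{1,-1,i,-i\}$ its unit group; $R(\alpha),I(\alpha)$ are real and imaginary parts. $\gcd(x,y)\in U$ means $x,y$ have no common non-unit divisor. $O=\{\alpha: R(\alpha)+I(\alpha)\equiv1\pmod 2\}$, $O^I=\{\alpha\in O: R(\alpha)\equiv 1\pmod 4\}$. *)

theory Defs
  imports Complex_Main
begin

text \<open>Gaussian integers Z[i] are represented as the complex numbers with integer
  real and imaginary parts.\<close>

definition gauss :: "complex \<Rightarrow> bool" where
  "gauss z \<longleftrightarrow> Re z \<in> \<int> \<and> Im z \<in> \<int>"

definition gdvd :: "complex \<Rightarrow> complex \<Rightarrow> bool" where
  "gdvd a b \<longleftrightarrow> (\<exists>c. gauss c \<and> b = a * c)"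

definition gunits :: "complex set" where
  "gunits = {1, -1, \<i>, -\<i>}"

definition gcd_unit :: "complex \<Rightarrow> complex \<Rightarrow> bool" where
  "gcd_unit x y \<longleftrightarrow> (\<forall>d. gauss d \<and> gdvd d x \<and> gdvd d y \<longrightarrow> d \<in> gunits)"

definition gprime :: "complex \<Rightarrow> bool" where
  "gprime p \<longleftrightarrow> gauss p \<and> p \<noteq> 0 \<and> p \<notin> gunits \<and>
     (\<forall>a b. gauss a \<and> gauss b \<and> gdvd p (a * b) \<longrightarrow> gdvd p a \<or> gdvd p b)"

definition gO :: "complex set" where
  "gO = {z. gauss z \<and> odd (\<lfloor>Re z\<rfloor> + \<lfloor>Im z\<rfloor>)}"

definition gOI :: "complex set" where
  "gOI = {z. z \<in> gO \<and> \<lfloor>Re z\<rfloor> mod 4 = 1}"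

end

theory Submission
  imports Defs
begin


lemma gauss_add[simp]: "gauss a \<Longrightarrow> gauss b \<Longrightarrow> gauss (a + b)"
  by (simp add: gauss_def)
lemma gauss_diff[simp]: "gauss a \<Longrightarrow> gauss b \<Longrightarrow> gauss (a - b)"
  by (simp add: gauss_def)
lemma gauss_uminus[simp]: "gauss a \<Longrightarrow> gauss (- a)"
  by (simp add: gauss_def)
lemma gauss_mult[simp]: "gauss a \<Longrightarrow> gauss b \<Longrightarrow> gauss (a * b)"
  by (simp add: gauss_def)
lemma gauss_power[simp]: "gauss a \<Longrightarrow> gauss (a ^ n)"
  by (induction n) (auto simp: gauss_def)
lemma gauss_1[simp]: "gauss 1" and gauss_0[simp]: "gauss 0" and gauss_i[simp]: "gauss \<i>"
  by (auto simp: gauss_def)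
lemma gauss_cnj[simp]: "gauss a \<Longrightarrow> gauss (cnj a)"
  by (simp add: gauss_def)
lemma gauss_1i[simp]: "gauss (1 + \<i>)" by simp

lemma gauss_repr: "gauss z \<Longrightarrow> z = Complex (of_int \<lfloor>Re z\<rfloor>) (of_int \<lfloor>Im z\<rfloor>)"
  unfolding gauss_def by (simp add: complex_eq_iff)

lemma gauss_Complex[simp]: "gauss (Complex (of_int a) (of_int b))"
  by (simp add: gauss_def)

lemma gdvd_refl[simp]: "gauss a \<Longrightarrow> gdvd a a"
  unfolding gdvd_def by (rule exI[of _ 1]) simp
lemma gdvd_0[simp]: "gdvd a 0"
  unfolding gdvd_def by (rule exI[of _ 0]) simp
lemma gdvd_trans: "gdvd a b \<Longrightarrow> gdvd b c \<Longrightarrow> gdvd a c"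
  unfolding gdvd_def by (metis gauss_mult mult.assoc)
lemma gdvd_multR: "gdvd a b \<Longrightarrow> gauss c \<Longrightarrow> gdvd a (b * c)"
  unfolding gdvd_def by (metis gauss_mult mult.assoc)
lemma gdvd_multL: "gdvd a b \<Longrightarrow> gauss c \<Longrightarrow> gdvd a (c * b)"
  using gdvd_multR by (simp add: mult.commute)
lemma gdvd_add: "gdvd a b \<Longrightarrow> gdvd a c \<Longrightarrow> gdvd a (b + c)"
  unfolding gdvd_def by (metis gauss_add distrib_left)
lemma gdvd_diff: "gdvd a b \<Longrightarrow> gdvd a c \<Longrightarrow> gdvd a (b - c)"
  unfolding gdvd_def by (metis gauss_diff right_diff_distrib)
lemma gdvd_uminus: "gdvd a b \<Longrightarrow> gdvd a (- b)"
  unfolding gdvd_def by (metis gauss_uminus mult_minus_right)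
lemma gdvd_times: "gauss a \<Longrightarrow> gauss c \<Longrightarrow> gdvd a (a * c)"
  unfolding gdvd_def by blast
lemma gdvd_times2: "gauss a \<Longrightarrow> gauss c \<Longrightarrow> gdvd a (c * a)"
  unfolding gdvd_def by (metis mult.commute)

lemma gunits_gauss: "u \<in> gunits \<Longrightarrow> gauss u"
  by (auto simp: gunits_def)
lemma gunits_nz: "u \<in> gunits \<Longrightarrow> u \<noteq> 0"
  by (auto simp: gunits_def)
lemma gunits_mult: "u \<in> gunits \<Longrightarrow> v \<in> gunits \<Longrightarrow> u * v \<in> gunits"
  by (auto simp: gunits_def)
lemma gunits_cnj: "u \<in> gunits \<Longrightarrow> cnj u \<in> gunits \<and> cnj u * u = 1"
  by (auto simp: gunits_def)
lemma gunits_sq: "u \<in> gunits \<Longrightarrow> u^2 = 1 \<or> u^2 = -1"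
  by (auto simp: gunits_def power2_eq_square)
lemma gunits_1[simp]: "1 \<in> gunits" by (simp add: gunits_def)

lemma gdvd_unit_cancel: "u \<in> gunits \<Longrightarrow> gdvd d (u * x) \<Longrightarrow> gdvd d x"
proof -
  assume u: "u \<in> gunits" and d: "gdvd d (u * x)"
  have e: "x = cnj u * (u * x)" using gunits_cnj[OF u] by (simp add: mult.assoc[symmetric])
  have "gdvd d (cnj u * (u * x))" by (rule gdvd_multL[OF d]) (simp add: gunits_gauss u)
  then show ?thesis using e by simp
qed

lemma gdvd_unit_left: "u \<in> gunits \<Longrightarrow> gdvd d x \<Longrightarrow> gdvd (u * d) x"
proof -
  assume u: "u \<in> gunits" and d: "gdvd d x"
  then obtain c where c: "gauss c" "x = d * c" by (auto simp: gdvd_def)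
  have "(u * d) * (cnj u * c) = (cnj u * u) * (d * c)" by (simp add: algebra_simps)
  also have "\<dots> = x" using c gunits_cnj[OF u] by simp
  finally show ?thesis unfolding gdvd_def using c u gunits_cnj gunits_gauss by (metis gauss_mult)
qed

lemma gcd_unit_units: "gcd_unit x y \<Longrightarrow> u \<in> gunits \<Longrightarrow> v \<in> gunits \<Longrightarrow> gcd_unit (u * x) (v * y)"
  unfolding gcd_unit_def using gdvd_unit_cancel by blast


definition gnorm :: "complex \<Rightarrow> nat" where
  "gnorm z = nat \<lfloor>(Re z)^2 + (Im z)^2\<rfloor>"

lemma gnorm_cmod: "gauss z \<Longrightarrow> real (gnorm z) = (cmod z)^2"
proof -
  assume g: "gauss z"
  obtain a b :: int where ab: "Re z = of_int a" "Im z = of_int b"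
    using g unfolding gauss_def by (auto elim!: Ints_cases)
  have "(Re z)^2 + (Im z)^2 = of_int (a^2 + b^2)" using ab by simp
  moreover have "a^2 + b^2 \<ge> 0" by simp
  ultimately have "real (gnorm z) = (Re z)^2 + (Im z)^2"
    unfolding gnorm_def by simp
  then show ?thesis by (simp add: cmod_power2)
qed

lemma gnorm_mult: "gauss a \<Longrightarrow> gauss b \<Longrightarrow> gnorm (a * b) = gnorm a * gnorm b"
proof -
  assume "gauss a" "gauss b"
  then have "real (gnorm (a*b)) = real (gnorm a * gnorm b)"
    by (simp add: gnorm_cmod norm_mult power_mult_distrib)
  then show ?thesis by (simp only: of_nat_eq_iff)
qed

lemma gnorm_0_iff: "gauss z \<Longrightarrow> gnorm z = 0 \<longleftrightarrow> z = 0"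
proof -
  assume g: "gauss z"
  have "gnorm z = 0 \<longleftrightarrow> real (gnorm z) = 0" by simp
  also have "\<dots> \<longleftrightarrow> z = 0" using gnorm_cmod[OF g] by simp
  finally show ?thesis .
qed

lemma int_sq_le1: "(a::int)^2 \<le> 1 \<Longrightarrow> a = -1 \<or> a = 0 \<or> a = 1"
proof -
  assume "a^2 \<le> 1"
  then have "\<bar>a\<bar>^2 \<le> 1^2" by simp
  then have "\<bar>a\<bar> \<le> 1" by (rule power2_le_imp_le) simp
  then show ?thesis by auto
qed

lemma gnorm_1_iff: "gauss z \<Longrightarrow> gnorm z = 1 \<longleftrightarrow> z \<in> gunits"
proof -
  assume g: "gauss z"
  obtain a b :: int where ab: "Re z = of_int a" "Im z = of_int b"
    using g unfolding gauss_def by (auto elim!: Ints_cases)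
  have z: "z = Complex (of_int a) (of_int b)" using ab by (simp add: complex_eq_iff)
  have n: "gnorm z = nat (a^2 + b^2)" unfolding gnorm_def ab
    by (metis floor_of_int of_int_add of_int_power)
  show ?thesis
  proof
    assume "gnorm z = 1"
    then have e: "a^2 + b^2 = 1" using n by (smt (verit) nat_eq_iff2 of_nat_1 zero_le_power2)
    then have "a^2 \<le> 1" "b^2 \<le> 1" by (smt (verit) zero_le_power2)+
    then have "a = -1 \<or> a = 0 \<or> a = 1" "b = -1 \<or> b = 0 \<or> b = 1" using int_sq_le1 by auto
    then show "z \<in> gunits" using e unfolding z gunits_def
      by (auto simp: complex_eq_iff)
  next
    assume "z \<in> gunits"
    then show "gnorm z = 1" unfolding gunits_def gnorm_def by auto
  qed
qed

lemma geuclid: "gauss a \<Longrightarrow> gauss b \<Longrightarrow> b \<noteq> 0 \<Longrightarrow>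
   \<exists>q r. gauss q \<and> gauss r \<and> a = b*q + r \<and> gnorm r < gnorm b"
proof -
  assume ga: "gauss a" and gb: "gauss b" and b0: "b \<noteq> 0"
  define w where "w = a / b"
  define q where "q = Complex (of_int (round (Re w))) (of_int (round (Im w)))"
  define r where "r = a - b*q"
  have gq: "gauss q" unfolding q_def by simp
  have gr: "gauss r" unfolding r_def using ga gb gq by simp
  have rw: "r = b * (w - q)" unfolding r_def w_def using b0 by (simp add: algebra_simps)
  have h1: "\<bar>Re (w - q)\<bar> \<le> 1/2" unfolding q_def
    using of_int_round_abs_le[of "Re w"] by (simp add: abs_minus_commute)
  have h2: "\<bar>Im (w - q)\<bar> \<le> 1/2" unfolding q_def
    using of_int_round_abs_le[of "Im w"] by (simp add: abs_minus_commute)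
  have s1: "(Re (w - q))^2 \<le> 1/4"
  proof -
    have "\<bar>Re (w - q)\<bar>^2 \<le> (1/2)^2" by (rule power_mono[OF h1]) simp
    then show ?thesis by (simp add: power2_eq_square)
  qed
  have s2: "(Im (w - q))^2 \<le> 1/4"
  proof -
    have "\<bar>Im (w - q)\<bar>^2 \<le> (1/2)^2" by (rule power_mono[OF h2]) simp
    then show ?thesis by (simp add: power2_eq_square)
  qed
  have c: "(cmod (w - q))^2 \<le> 1/2" using s1 s2 by (simp add: cmod_power2)
  have cb: "(cmod b)^2 > 0" using b0 by simp
  have "(cmod r)^2 = (cmod b)^2 * (cmod (w - q))^2" by (simp add: rw norm_mult power_mult_distrib)
  also have "\<dots> \<le> (cmod b)^2 * (1/2)" using c cb by (intro mult_left_mono) auto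
  also have "\<dots> < (cmod b)^2" using cb by simp
  finally have "real (gnorm r) < real (gnorm b)" using gnorm_cmod gr gb by simp
  then have "gnorm r < gnorm b" by simp
  moreover have "a = b*q + r" unfolding r_def by simp
  ultimately show ?thesis using gq gr by blast
qed


lemma gbezout: "gauss a \<Longrightarrow> gauss b \<Longrightarrow> a \<noteq> 0 \<Longrightarrow>
  \<exists>g x y. gauss g \<and> g \<noteq> 0 \<and> gdvd g a \<and> gdvd g b \<and> gauss x \<and> gauss y \<and> g = a*x + b*y"
proof -
  assume ga: "gauss a" and gb: "gauss b" and a0: "a \<noteq> 0"
  define P where "P n \<longleftrightarrow> (\<exists>x y. gauss x \<and> gauss y \<and> a*x+b*y \<noteq> 0 \<and> gnorm (a*x+b*y) = n)" for n
  have "P (gnorm a)" unfolding P_def using a0 by (intro exI[of _ 1] exI[of _ 0]) simp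
  then obtain n where Pn: "P n" and mn: "\<And>m. m < n \<Longrightarrow> \<not> P m"
    using exists_least_iff[of P] by blast
  then obtain x y where xy: "gauss x" "gauss y" "a*x+b*y \<noteq> 0" "gnorm (a*x+b*y) = n"
    unfolding P_def by blast
  define g where "g = a*x+b*y"
  have gg: "gauss g" unfolding g_def using xy ga gb by simp
  have key: "gdvd g c" if xy': "gauss x'" "gauss y'" "c = a*x' + b*y'" for c x' y'
  proof -
    have gc: "gauss c" using that ga gb by simp
    obtain q r where qr: "gauss q" "gauss r" "c = g*q + r" "gnorm r < gnorm g"
      using geuclid[OF gc gg] xy(3) unfolding g_def by blast
    have "r = a*(x' - x*q) + b*(y' - y*q)" using qr(3) xy'(3) unfolding g_def
      by (simp add: algebra_simps)
    have "r = 0"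
    proof (rule ccontr)
      assume "r \<noteq> 0"
      then have "P (gnorm r)" unfolding P_def using \<open>r = _\<close> xy xy' qr
        by (intro exI[of _ "x' - x*q"] exI[of _ "y' - y*q"]) auto
      moreover have "gnorm r < n" using qr(4) xy(4) g_def by simp
      ultimately show False using mn by blast
    qed
    then show ?thesis using qr unfolding gdvd_def by auto
  qed
  have "gdvd g a" by (rule key[of 1 0]) auto
  moreover have "gdvd g b" by (rule key[of 0 1]) auto
  ultimately show ?thesis using gg xy g_def by blast
qed

lemma gdvd_gnorm_le: "gdvd d z \<Longrightarrow> gauss d \<Longrightarrow> z \<noteq> 0 \<Longrightarrow> gnorm d \<le> gnorm z"
proof -
  assume "gdvd d z" "gauss d" "z \<noteq> 0"
  then obtain c where c: "gauss c" "z = d * c" by (auto simp: gdvd_def)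
  then have "c \<noteq> 0" using \<open>z \<noteq> 0\<close> by auto
  then have "gnorm c \<noteq> 0" using gnorm_0_iff c by simp
  then show ?thesis using gnorm_mult[OF \<open>gauss d\<close> c(1)] c by simp
qed

lemma gprime_divisor: "gauss z \<Longrightarrow> z \<noteq> 0 \<Longrightarrow> z \<notin> gunits \<Longrightarrow> \<exists>p. gprime p \<and> gdvd p z"
proof -
  assume gz: "gauss z" and z0: "z \<noteq> 0" and zu: "z \<notin> gunits"
  define P where "P n \<longleftrightarrow> (\<exists>d. gauss d \<and> gdvd d z \<and> d \<notin> gunits \<and> gnorm d = n)" for n
  have "P (gnorm z)" unfolding P_def using gz zu by auto
  then obtain n where Pn: "P n" and mn: "\<And>m. m < n \<Longrightarrow> \<not> P m"
    using exists_least_iff[of P] by blast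
  then obtain d where d: "gauss d" "gdvd d z" "d \<notin> gunits" "gnorm d = n"
    unfolding P_def by blast
  have d0: "d \<noteq> 0" using d(2) z0 by (auto simp: gdvd_def)
  have "gprime d" unfolding gprime_def
  proof (intro conjI allI impI)
    fix a b assume ab: "gauss a \<and> gauss b \<and> gdvd d (a * b)"
    show "gdvd d a \<or> gdvd d b"
    proof (cases "gdvd d a")
      case True then show ?thesis by simp
    next
      case False note na = this
      obtain g x y where g: "gauss g" "g \<noteq> 0" "gdvd g d" "gdvd g a" "gauss x" "gauss y" "g = d*x + a*y"
        using gbezout[OF d(1) _ d0, of a] ab by blast
      have gu: "g \<in> gunits"
      proof (rule ccontr)
        assume gnu: "g \<notin> gunits"
        have "gdvd g z" using gdvd_trans g(3) d(2) by blast
        then have "\<not> gnorm g < n" using mn[of "gnorm g"] gnu g(1) unfolding P_def by blast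
        moreover have "gnorm g \<le> gnorm d" using gdvd_gnorm_le[OF g(3) g(1) d0] .
        ultimately have eq: "gnorm g = gnorm d" using d(4) by simp
        obtain c where c: "gauss c" "d = g * c" using g(3) by (auto simp: gdvd_def)
        have "gnorm d = gnorm g * gnorm c" using c gnorm_mult g(1) by simp
        then have "gnorm c = 1" using eq gnorm_0_iff[OF g(1)] g(2) by simp
        then have cu: "c \<in> gunits" using gnorm_1_iff c(1) by simp
        have "g = cnj c * d" using c gunits_cnj[OF cu] by (simp add: algebra_simps)
        then have "gdvd d g" using gdvd_times2 d(1) gunits_gauss gunits_cnj cu by metis
        then have "gdvd d a" using g(4) gdvd_trans by blast
        then show False using na by simp
      qed
      have "b = cnj g * (g * b)" using gunits_cnj[OF gu] by (simp add: mult.assoc[symmetric])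
      also have "g * b = d * (x * b) + (a * b) * y" using g(7) by (simp add: algebra_simps)
      finally have "b = cnj g * (d * (x * b) + (a * b) * y)" .
      moreover have "gdvd d (d * (x * b) + (a * b) * y)"
        using ab g d(1) by (intro gdvd_add gdvd_times gdvd_multR[of d "a*b" y]) auto
      ultimately have "gdvd d b" using gdvd_multL gunits_gauss gunits_cnj gu by metis
      then show ?thesis by simp
    qed
  qed (use d d0 in auto)
  then show ?thesis using d by blast
qed


lemma gauss_obtain: "gauss z \<Longrightarrow> (\<And>a b::int. z = Complex (of_int a) (of_int b) \<Longrightarrow> P) \<Longrightarrow> P"
  using gauss_repr by blast

lemma cmult_int: "Complex (of_int a) (of_int b) * Complex (of_int c) (of_int d) =
   Complex (of_int (a*c - b*d)) (of_int (a*d + b*c))"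
  by (simp add: complex_mult)

lemma gdvd_1i_Complex: "gdvd (1+\<i>) (Complex (of_int a) (of_int b)) \<longleftrightarrow> even (a+b)"
proof
  assume "gdvd (1+\<i>) (Complex (of_int a) (of_int b))"
  then obtain c where c: "gauss c" "Complex (of_int a) (of_int b) = (1+\<i>) * c" by (auto simp: gdvd_def)
  obtain p q :: int where pq: "c = Complex (of_int p) (of_int q)" using gauss_obtain[OF c(1)] by blast
  have "Complex (of_int a) (of_int b) = Complex (of_int (p - q)) (of_int (p + q))"
    using c(2) pq by (simp add: complex_eq_iff)
  then have "a = p - q" "b = p + q" by simp_all
  then show "even (a+b)" by simp
next
  assume "even (a+b)"
  then obtain k where k: "a + b = 2*k" by blast
  have "Complex (of_int a) (of_int b) = (1+\<i>) * Complex (of_int k) (of_int (k - a))"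
    using k by (simp add: complex_eq_iff)
  then show "gdvd (1+\<i>) (Complex (of_int a) (of_int b))" unfolding gdvd_def
    using gauss_Complex by blast
qed

lemma odd_mult: "gauss x \<Longrightarrow> gauss y \<Longrightarrow> \<not> gdvd (1+\<i>) x \<Longrightarrow> \<not> gdvd (1+\<i>) y \<Longrightarrow> \<not> gdvd (1+\<i>) (x*y)"
proof -
  assume gx: "gauss x" and gy: "gauss y" and ox: "\<not> gdvd (1+\<i>) x" and oy: "\<not> gdvd (1+\<i>) y"
  obtain a b :: int where x: "x = Complex (of_int a) (of_int b)" using gauss_obtain[OF gx] by blast
  obtain c d :: int where y: "y = Complex (of_int c) (of_int d)" using gauss_obtain[OF gy] by blast
  have "odd (a+b)" "odd (c+d)" using ox oy x y gdvd_1i_Complex by auto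
  moreover have "a*c - b*d + (a*d + b*c) = (a+b)*(c+d) - 2*(b*d)" by (simp add: algebra_simps)
  moreover have "\<And>p q::int. odd p \<Longrightarrow> odd (p - 2*q)" by presburger
  moreover have "odd ((a+b)*(c+d))" using calculation(1,2) by simp
  ultimately have "odd (a*c - b*d + (a*d + b*c))" by metis
  then show ?thesis unfolding x y cmult_int gdvd_1i_Complex .
qed

lemma gO_iff: "z \<in> gO \<longleftrightarrow> gauss z \<and> \<not> gdvd (1+\<i>) z"
proof (cases "gauss z")
  case True
  then obtain a b :: int where z: "z = Complex (of_int a) (of_int b)" using gauss_obtain by blast
  show ?thesis unfolding gO_def z gdvd_1i_Complex by simp
qed (auto simp: gO_def)

lemma gOI_Complex: "Complex (of_int a) (of_int b) \<in> gOI \<longleftrightarrow> odd (a+b) \<and> a mod 4 = 1"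
  unfolding gOI_def gO_def by simp

lemma gOI_gauss: "x \<in> gOI \<Longrightarrow> gauss x" by (simp add: gOI_def gO_def)
lemma gOI_odd: "x \<in> gOI \<Longrightarrow> \<not> gdvd (1+\<i>) x" by (simp add: gOI_def gO_iff)
lemma gOI_nz: "x \<in> gOI \<Longrightarrow> x \<noteq> 0" using gOI_odd by fastforce
lemma gOI_1: "1 \<in> gOI"
proof -
  have "(1::complex) = Complex (of_int 1) (of_int 0)" by (simp add: complex_eq_iff)
  moreover have "Complex (of_int 1) (of_int 0) \<in> gOI" unfolding gOI_Complex by simp
  ultimately show ?thesis by simp
qed

lemma gOI_assoc: "gauss z \<Longrightarrow> \<not> gdvd (1+\<i>) z \<Longrightarrow> \<exists>u\<in>gunits. u * z \<in> gOI"
proof -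
  assume gz: "gauss z" and oz: "\<not> gdvd (1+\<i>) z"
  obtain a b :: int where z: "z = Complex (of_int a) (of_int b)" using gauss_obtain[OF gz] by blast
  have o: "odd (a+b)" using oz z gdvd_1i_Complex by auto
  have e1: "1 * z = Complex (of_int a) (of_int b)" using z by simp
  have e2: "(-1) * z = Complex (of_int (-a)) (of_int (-b))" using z by (simp add: complex_eq_iff)
  have e3: "(-\<i>) * z = Complex (of_int b) (of_int (-a))" using z by (simp add: complex_eq_iff)
  have e4: "\<i> * z = Complex (of_int (-b)) (of_int a)" using z by (simp add: complex_eq_iff)
  have u: "1 \<in> gunits" "-1 \<in> gunits" "-\<i> \<in> gunits" "\<i> \<in> gunits" by (auto simp: gunits_def)
  have "a mod 4 = 1 \<or> a mod 4 = 3 \<or> b mod 4 = 1 \<or> b mod 4 = 3" using o by presburger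
  then consider "a mod 4 = 1" | "a mod 4 = 3" | "b mod 4 = 1" | "b mod 4 = 3" by blast
  then show ?thesis
  proof cases
    case 1 then show ?thesis using u(1) e1 o gOI_Complex by metis
  next
    case 2
    have "odd (-a + -b)" "(-a) mod 4 = 1" using o 2 by presburger+
    then show ?thesis using u(2) e2 gOI_Complex by metis
  next
    case 3
    have "odd (b + -a)" using o by presburger
    then show ?thesis using u(3) e3 3 gOI_Complex by metis
  next
    case 4
    have "odd (-b + a)" "(-b) mod 4 = 1" using o 4 by presburger+
    then show ?thesis using u(4) e4 gOI_Complex by metis
  qed
qed

lemma gOI_unique: "x \<in> gOI \<Longrightarrow> u \<in> gunits \<Longrightarrow> u * x \<in> gOI \<Longrightarrow> u = 1"
proof -
  assume x: "x \<in> gOI" and u: "u \<in> gunits" and ux: "u * x \<in> gOI"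
  obtain a b :: int where z: "x = Complex (of_int a) (of_int b)" using gauss_obtain gOI_gauss[OF x] by blast
  have o: "odd (a+b)" "a mod 4 = 1" using x z gOI_Complex by auto
  have e2: "(-1) * x = Complex (of_int (-a)) (of_int (-b))" using z by (simp add: complex_eq_iff)
  have e3: "(-\<i>) * x = Complex (of_int b) (of_int (-a))" using z by (simp add: complex_eq_iff)
  have e4: "\<i> * x = Complex (of_int (-b)) (of_int a)" using z by (simp add: complex_eq_iff)
  have n2: "\<not> (-a) mod 4 = 1" using o by presburger
  have n3: "\<not> b mod 4 = 1" using o by presburger
  have n4: "\<not> (-b) mod 4 = 1" using o by presburger
  from u consider "u = 1" | "u = -1" | "u = \<i>" | "u = -\<i>" by (auto simp: gunits_def)
  then show ?thesis
  proof cases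
    case 2
    then have "Complex (of_int (-a)) (of_int (-b)) \<in> gOI" using ux e2 by metis
    then show ?thesis using n2 gOI_Complex by blast
  next
    case 3
    then have "Complex (of_int (-b)) (of_int a) \<in> gOI" using ux e4 by metis
    then show ?thesis using n4 gOI_Complex by blast
  next
    case 4
    then have "Complex (of_int b) (of_int (-a)) \<in> gOI" using ux e3 by metis
    then show ?thesis using n3 gOI_Complex by blast
  qed simp
qed

lemma gOI_mult: "x \<in> gOI \<Longrightarrow> y \<in> gOI \<Longrightarrow> x * y \<in> gOI"
proof -
  assume x: "x \<in> gOI" and y: "y \<in> gOI"
  obtain a b :: int where xe: "x = Complex (of_int a) (of_int b)" using gauss_obtain gOI_gauss[OF x] by blast
  obtain c d :: int where ye: "y = Complex (of_int c) (of_int d)" using gauss_obtain gOI_gauss[OF y] by blast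
  have o: "odd (a+b)" "a mod 4 = 1" "odd (c+d)" "c mod 4 = 1" using x y xe ye gOI_Complex by auto
  define k l m n where "k = a div 4" "l = b div 2" "m = c div 4" "n = d div 2"
  have kl: "a = 4*k+1" "b = 2*l" "c = 4*m+1" "d = 2*n" using o unfolding k_l_m_n_def by presburger+
  have r: "a*c - b*d = 4*(4*k*m + k + m - l*n) + 1" using kl by (simp add: algebra_simps)
  have i: "a*d + b*c = 2*((4*k+1)*n + l*(4*m+1))" using kl by (simp add: algebra_simps)
  have "odd (a*c - b*d + (a*d + b*c))" "(a*c - b*d) mod 4 = 1" unfolding r i by presburger+
  then show ?thesis unfolding xe ye cmult_int gOI_Complex by simp
qed

lemma gOI_sq: "x \<in> gOI \<Longrightarrow> \<exists>k::int. Re (x^2) = of_int (4*k+1)"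
proof -
  assume x: "x \<in> gOI"
  obtain a b :: int where xe: "x = Complex (of_int a) (of_int b)" using gauss_obtain gOI_gauss[OF x] by blast
  have o: "odd (a+b)" "a mod 4 = 1" using x xe gOI_Complex by auto
  define k l where "k = a div 4" "l = b div 2"
  have kl: "a = 4*k+1" "b = 2*l" using o unfolding k_l_def by presburger+
  have "Re (x^2) = of_int (a*a - b*b)" unfolding xe power2_eq_square cmult_int by simp
  also have "a*a - b*b = 4*(4*k*k + 2*k - l*l) + 1" using kl by (simp add: algebra_simps)
  finally show ?thesis by blast
qed


lemma gnorm_1i: "gnorm (1+\<i>) = 2"
  unfolding gnorm_def by simp

lemma strip_1i: "gauss z \<Longrightarrow> z \<noteq> 0 \<Longrightarrow> \<exists>k q. gauss q \<and> \<not> gdvd (1+\<i>) q \<and> z = (1+\<i>)^k * q"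
proof (induction "gnorm z" arbitrary: z rule: less_induct)
  case less
  show ?case
  proof (cases "gdvd (1+\<i>) z")
    case False
    then show ?thesis using less.prems by (intro exI[of _ 0] exI[of _ z]) simp
  next
    case True
    then obtain c where c: "gauss c" "z = (1+\<i>) * c" by (auto simp: gdvd_def)
    have c0: "c \<noteq> 0" using c less.prems by auto
    have "gnorm z = 2 * gnorm c" using c gnorm_mult gnorm_1i by simp
    moreover have "gnorm c \<noteq> 0" using gnorm_0_iff c(1) c0 by simp
    ultimately have "gnorm c < gnorm z" by simp
    then obtain k q where "gauss q" "\<not> gdvd (1+\<i>) q" "c = (1+\<i>)^k * q"
      using less.hyps c(1) c0 by blast
    then show ?thesis using c by (intro exI[of _ "Suc k"] exI[of _ q]) (simp add: mult.assoc)
  qed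
qed

lemma gunits_inv: "u \<in> gunits \<Longrightarrow> \<exists>u'\<in>gunits. u' * u = 1"
  using gunits_cnj by blast

lemma gprime_assoc: "gprime p \<Longrightarrow> u \<in> gunits \<Longrightarrow> gprime (u * p)"
proof -
  assume p: "gprime p" and u: "u \<in> gunits"
  have gp: "gauss p" "p \<noteq> 0" "p \<notin> gunits" using p by (auto simp: gprime_def)
  have cu: "cnj u \<in> gunits" "cnj u * u = 1" using gunits_cnj[OF u] by auto
  have notu: "u * p \<notin> gunits"
  proof
    assume "u * p \<in> gunits"
    then have "cnj u * (u * p) \<in> gunits" using gunits_mult cu by blast
    then show False using cu gp by (simp add: mult.assoc[symmetric])
  qed
  show ?thesis unfolding gprime_def
  proof (intro conjI allI impI)
    fix a b assume ab: "gauss a \<and> gauss b \<and> gdvd (u * p) (a * b)"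
    then have "gdvd p (a*b)" using gdvd_unit_left[OF cu(1), of "u*p" "a*b"] cu gdvd_refl
      by (simp add: mult.assoc[symmetric])
    then have "gdvd p a \<or> gdvd p b" using p ab unfolding gprime_def by blast
    then show "gdvd (u * p) a \<or> gdvd (u * p) b" using gdvd_unit_left[OF u] by blast
  qed (use gp u notu gunits_gauss gunits_nz in auto)
qed

lemma prod_step:
  assumes "finite P" "z = (\<Prod>p\<in>P. p ^ e p)"
  shows "\<exists>e'. q * z = (\<Prod>p\<in>insert q P. p ^ e' p)"
proof (cases "q \<in> P")
  case True
  define e' where "e' = e(q := Suc (e q))"
  have "(\<Prod>p\<in>P. p ^ e' p) = q ^ e' q * (\<Prod>p\<in>P - {q}. p ^ e' p)"
    using assms(1) True by (simp add: prod.remove)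
  also have "(\<Prod>p\<in>P - {q}. p ^ e' p) = (\<Prod>p\<in>P - {q}. p ^ e p)"
    by (rule prod.cong) (auto simp: e'_def)
  also have "q ^ e' q = q * q ^ e q" by (simp add: e'_def)
  finally have "(\<Prod>p\<in>P. p ^ e' p) = q * (q ^ e q * (\<Prod>p\<in>P - {q}. p ^ e p))" by (simp add: mult.assoc)
  also have "q ^ e q * (\<Prod>p\<in>P - {q}. p ^ e p) = z"
    using assms True by (simp add: prod.remove)
  finally show ?thesis using True by (intro exI[of _ e']) (simp add: insert_absorb)
next
  case False
  define e' where "e' = e(q := 1)"
  have "(\<Prod>p\<in>insert q P. p ^ e' p) = q ^ e' q * (\<Prod>p\<in>P. p ^ e' p)"
    using assms(1) False by simp
  also have "(\<Prod>p\<in>P. p ^ e' p) = (\<Prod>p\<in>P. p ^ e p)"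
    by (rule prod.cong) (use False in \<open>auto simp: e'_def\<close>)
  finally show ?thesis using assms(2) by (intro exI[of _ e']) (simp add: e'_def)
qed

lemma factor_gOI: "q \<in> gOI \<Longrightarrow> \<exists>P e. finite P \<and> (\<forall>p\<in>P. gprime p \<and> p \<in> gOI) \<and> q = (\<Prod>p\<in>P. p ^ e p)"
proof (induction "gnorm q" arbitrary: q rule: less_induct)
  case less
  have gq: "gauss q" and oq: "\<not> gdvd (1+\<i>) q" and q0: "q \<noteq> 0"
    using less.prems gOI_gauss gOI_odd gOI_nz by auto
  show ?case
  proof (cases "q \<in> gunits")
    case True
    then have "q = 1" using gOI_unique[OF gOI_1 True] less.prems by simp
    then show ?thesis by (intro exI[of _ "{}"]) simp
  next
    case False
    obtain p where p: "gprime p" "gdvd p q" using gprime_divisor[OF gq q0 False] by blast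
    have gp: "gauss p" using p by (simp add: gprime_def)
    obtain c where c: "gauss c" "q = p * c" using p by (auto simp: gdvd_def)
    have op: "\<not> gdvd (1+\<i>) p" using oq c gdvd_multR by blast
    obtain u where u: "u \<in> gunits" "u * p \<in> gOI" using gOI_assoc[OF gp op] by blast
    define p' where "p' = u * p"
    have p'p: "gprime p'" using gprime_assoc[OF p(1) u(1)] p'_def by simp
    have cu: "cnj u \<in> gunits" "cnj u * u = 1" using gunits_cnj[OF u(1)] by auto
    define c' where "c' = cnj u * c"
    have gc': "gauss c'" using c cu gunits_gauss by (simp add: c'_def)
    have "p' * c' = (cnj u * u) * (p * c)" by (simp add: p'_def c'_def algebra_simps)
    then have qe: "q = p' * c'" using c cu by simp
    have oc': "\<not> gdvd (1+\<i>) c'" using oq qe gdvd_multL p'p gprime_def by blast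
    obtain w where w: "w \<in> gunits" "w * c' \<in> gOI" using gOI_assoc[OF gc' oc'] by blast
    have cw: "cnj w \<in> gunits" "cnj w * w = 1" using gunits_cnj[OF w(1)] by auto
    define r where "r = w * c'"
    have x: "p' * r \<in> gOI" using gOI_mult u(2) w(2) p'_def r_def by simp
    have "cnj w * (p' * r) = (cnj w * w) * (p' * c')" by (simp add: r_def algebra_simps)
    also have "\<dots> = p' * c'" using cw(2) by simp
    finally have "q = cnj w * (p' * r)" unfolding qe by (rule sym)
    then have "cnj w = 1" using gOI_unique[OF x cw(1)] less.prems by simp
    then have qr: "q = p' * r" using \<open>q = cnj w * (p' * r)\<close> by simp
    have rOI: "r \<in> gOI" using w(2) r_def by simp
    have gr: "gauss r" using gOI_gauss[OF rOI] .
    have gp': "gauss p'" "p' \<noteq> 0" "p' \<notin> gunits" using p'p by (auto simp: gprime_def)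
    have "gnorm p' \<noteq> 0" "gnorm p' \<noteq> 1" using gp' gnorm_0_iff gnorm_1_iff by auto
    moreover have "gnorm r \<noteq> 0" using gnorm_0_iff gr gOI_nz[OF rOI] by simp
    moreover have "gnorm q = gnorm p' * gnorm r" using qr gnorm_mult gp' gr by simp
    ultimately have "2 \<le> gnorm p'" "gnorm r \<noteq> 0" "gnorm q = gnorm p' * gnorm r" by simp_all
    then have "gnorm r * 2 \<le> gnorm q" by simp
    then have "gnorm r < gnorm q" using \<open>gnorm r \<noteq> 0\<close> by linarith
    then obtain P e where Pe: "finite P" "\<forall>p\<in>P. gprime p \<and> p \<in> gOI" "r = (\<Prod>p\<in>P. p ^ e p)"
      using less.hyps rOI by blast
    obtain e' where "p' * r = (\<Prod>p\<in>insert p' P. p ^ e' p)" using prod_step[OF Pe(1) Pe(3)] by blast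
    moreover have "finite (insert p' P)" using Pe(1) by simp
    moreover have "\<forall>p\<in>insert p' P. gprime p \<and> p \<in> gOI" using Pe(2) p'p u(2) p'_def by simp
    ultimately show ?thesis using qr by metis
  qed
qed


lemma gcd_gamma:
  assumes g: "gauss \<alpha>" "gauss \<beta>" "gauss \<gamma>" and eq: "\<alpha>\<^sup>2 + \<i> * \<beta>\<^sup>2 + \<gamma>\<^sup>2 = 0"
    and gc: "gcd_unit \<alpha> \<beta>" and b0: "\<beta> \<noteq> 0"
  shows "gcd_unit \<gamma> \<beta>"
  unfolding gcd_unit_def
proof (intro allI impI)
  fix d assume d: "gauss d \<and> gdvd d \<gamma> \<and> gdvd d \<beta>"
  show "d \<in> gunits"
  proof (rule ccontr)
    assume du: "d \<notin> gunits"
    have d0: "d \<noteq> 0" using d b0 by (auto simp: gdvd_def)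
    obtain p where p: "gprime p" "gdvd p d" using gprime_divisor[OF _ d0 du] d by blast
    have pg: "gdvd p \<gamma>" "gdvd p \<beta>" using p d gdvd_trans by blast+
    have "\<alpha> * \<alpha> = - (\<i> * (\<beta> * \<beta>) + \<gamma> * \<gamma>)" 
    proof -
      have "\<alpha> * \<alpha> + (\<i> * (\<beta> * \<beta>) + \<gamma> * \<gamma>) = 0" using eq by (simp add: power2_eq_square add.assoc)
      then show ?thesis by (simp only: eq_neg_iff_add_eq_0)
    qed
    moreover have "gdvd p (- (\<i> * (\<beta> * \<beta>) + \<gamma> * \<gamma>))"
      using pg g by (intro gdvd_uminus gdvd_add gdvd_multL gdvd_multR) auto
    ultimately have "gdvd p (\<alpha> * \<alpha>)" by simp
    then have "gdvd p \<alpha>" using p(1) g unfolding gprime_def by blast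
    then have "p \<in> gunits" using gc pg p(1) unfolding gcd_unit_def gprime_def by blast
    then show False using p(1) unfolding gprime_def by blast
  qed
qed

lemma finish:
  assumes "u \<in> gunits" "v \<in> gunits" "w \<in> gunits" "(\<alpha>', \<gamma>') \<in> {(\<alpha>, \<gamma>), (\<gamma>, \<alpha>)}"
    "(u * \<alpha>')\<^sup>2 + \<i> * (v * \<beta>)\<^sup>2 = (w * \<gamma>')\<^sup>2" "u * \<alpha>' \<in> gOI" "w * \<gamma>' \<in> gOI"
    "\<exists>(a1::nat) (P::complex set) (e::complex \<Rightarrow> nat).
                     finite P \<and> (\<forall>p\<in>P. gprime p \<and> p \<in> gOI) \<and>
                     v * \<beta> = (1 + \<i>) ^ (2 + a1) * (\<Prod>p\<in>P. p ^ e p)"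
    "gcd_unit (u * \<alpha>') (v * \<beta>)" "u * \<alpha>' * (v * \<beta>) * (w * \<gamma>') \<noteq> 0"
  shows "\<exists>u v w \<alpha>' \<gamma>'. u \<in> gunits \<and> v \<in> gunits \<and> w \<in> gunits \<and>
               (\<alpha>', \<gamma>') \<in> {(\<alpha>, \<gamma>), (\<gamma>, \<alpha>)} \<and>
               (let X = u * \<alpha>'; Y = v * \<beta>; Z = w * \<gamma>' in
                  X\<^sup>2 + \<i> * Y\<^sup>2 = Z\<^sup>2 \<and> X \<in> gOI \<and> Z \<in> gOI \<and>
                  (\<exists>(a1::nat) (P::complex set) (e::complex \<Rightarrow> nat).
                     finite P \<and> (\<forall>p\<in>P. gprime p \<and> p \<in> gOI) \<and>
                     Y = (1 + \<i>) ^ (2 + a1) * (\<Prod>p\<in>P. p ^ e p)) \<and>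
                  gcd_unit X Y \<and> X * Y * Z \<noteq> 0)"
  unfolding Let_def using assms by blast

lemma part1:
  assumes g: "gauss \<alpha>" "gauss \<beta>" "gauss \<gamma>" and eq: "\<alpha>\<^sup>2 + \<i> * \<beta>\<^sup>2 + \<gamma>\<^sup>2 = 0"
    and nz: "\<alpha> * \<beta> * \<gamma> \<noteq> 0" and gc: "gcd_unit \<alpha> \<beta>" and dv: "gdvd ((1 + \<i>)\<^sup>2) \<beta>"
  shows "\<exists>u v w \<alpha>' \<gamma>'. u \<in> gunits \<and> v \<in> gunits \<and> w \<in> gunits \<and>
               (\<alpha>', \<gamma>') \<in> {(\<alpha>, \<gamma>), (\<gamma>, \<alpha>)} \<and>
               (let X = u * \<alpha>'; Y = v * \<beta>; Z = w * \<gamma>' in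
                  X\<^sup>2 + \<i> * Y\<^sup>2 = Z\<^sup>2 \<and> X \<in> gOI \<and> Z \<in> gOI \<and>
                  (\<exists>(a1::nat) (P::complex set) (e::complex \<Rightarrow> nat).
                     finite P \<and> (\<forall>p\<in>P. gprime p \<and> p \<in> gOI) \<and>
                     Y = (1 + \<i>) ^ (2 + a1) * (\<Prod>p\<in>P. p ^ e p)) \<and>
                  gcd_unit X Y \<and> X * Y * Z \<noteq> 0)"
proof -
  have a0: "\<alpha> \<noteq> 0" and b0: "\<beta> \<noteq> 0" and c0: "\<gamma> \<noteq> 0" using nz by auto
  obtain \<beta>0 where b: "gauss \<beta>0" "\<beta> = (1+\<i>)^2 * \<beta>0" using dv by (auto simp: gdvd_def)
  have b1: "gdvd (1+\<i>) \<beta>" unfolding gdvd_def using b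
    by (intro exI[of _ "(1+\<i>) * \<beta>0"]) (simp add: power2_eq_square mult.assoc)
  have nu: "1 + \<i> \<notin> gunits" by (auto simp: gunits_def complex_eq_iff)
  have oa: "\<not> gdvd (1+\<i>) \<alpha>"
  proof
    assume "gdvd (1+\<i>) \<alpha>"
    then have "1+\<i> \<in> gunits" using gc b1 gauss_1i unfolding gcd_unit_def by blast
    then show False using nu by blast
  qed
  have og: "\<not> gdvd (1+\<i>) \<gamma>"
  proof
    assume h: "gdvd (1+\<i>) \<gamma>"
    have "\<alpha> * \<alpha> = - (\<i> * (\<beta> * \<beta>) + \<gamma> * \<gamma>)" 
    proof -
      have "\<alpha> * \<alpha> + (\<i> * (\<beta> * \<beta>) + \<gamma> * \<gamma>) = 0" using eq by (simp add: power2_eq_square add.assoc)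
      then show ?thesis by (simp only: eq_neg_iff_add_eq_0)
    qed
    moreover have "gdvd (1+\<i>) (- (\<i> * (\<beta> * \<beta>) + \<gamma> * \<gamma>))"
      using h b1 g by (intro gdvd_uminus gdvd_add gdvd_multL gdvd_multR) auto
    ultimately have "gdvd (1+\<i>) (\<alpha> * \<alpha>)" by simp
    then show False using odd_mult[OF g(1) g(1) oa oa] by simp
  qed
  obtain u where u: "u \<in> gunits" "u * \<alpha> \<in> gOI" using gOI_assoc[OF g(1) oa] by blast
  obtain w where w: "w \<in> gunits" "w * \<gamma> \<in> gOI" using gOI_assoc[OF g(3) og] by blast
  obtain k q0 where kq: "gauss q0" "\<not> gdvd (1+\<i>) q0" "\<beta> = (1+\<i>)^k * q0"
    using strip_1i[OF g(2) b0] by blast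
  obtain c where c: "c \<in> gunits" "c * q0 \<in> gOI" using gOI_assoc[OF kq(1) kq(2)] by blast
  have k2: "k \<ge> 2"
  proof (rule ccontr)
    assume "\<not> k \<ge> 2"
    then consider "k = 0" | "k = 1" by linarith
    then show False
    proof cases
      case 1
      then have "q0 = (1+\<i>) * ((1+\<i>) * \<beta>0)" using kq b by (simp add: power2_eq_square mult.assoc)
      then show False using kq(2) b(1) gdvd_times[of "1+\<i>" "(1+\<i>) * \<beta>0"] by simp
    next
      case 2
      then have "(1+\<i>) * q0 = \<beta>" using kq(3) by simp
      also have "\<beta> = (1+\<i>) * ((1+\<i>) * \<beta>0)" using b(2) by (simp add: power2_eq_square mult.assoc)
      finally have "(1+\<i>) * q0 = (1+\<i>) * ((1+\<i>) * \<beta>0)" .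
      moreover have ne: "1+\<i> \<noteq> 0" by (simp add: complex_eq_iff)
      ultimately have "q0 = (1+\<i>) * \<beta>0" using mult_left_cancel[OF ne] by blast
      then show False using kq(2) b(1) gdvd_times[of "1+\<i>" "\<beta>0"] by simp
    qed
  qed
  obtain P e where Pe: "finite P" "\<forall>p\<in>P. gprime p \<and> p \<in> gOI" "c * q0 = (\<Prod>p\<in>P. p ^ e p)"
    using factor_gOI[OF c(2)] by blast
  have kk: "2 + (k - 2) = k" using k2 by simp
  have cb: "c * \<beta> = (1+\<i>)^(2 + (k - 2)) * (c * q0)" unfolding kk using kq(3) by (simp add: algebra_simps)
  then have "c * \<beta> = (1+\<i>)^(2 + (k - 2)) * (\<Prod>p\<in>P. p ^ e p)" using Pe(3) by simp
  then have Yf: "\<exists>(a1::nat) (P::complex set) (e::complex \<Rightarrow> nat).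
                     finite P \<and> (\<forall>p\<in>P. gprime p \<and> p \<in> gOI) \<and>
                     c * \<beta> = (1 + \<i>) ^ (2 + a1) * (\<Prod>p\<in>P. p ^ e p)"
    using Pe(1,2) by blast
  define s where "s = u^2"
  define t where "t = w^2"
  define r where "r = c^2"
  have s: "s = 1 \<or> s = -1" unfolding s_def by (rule gunits_sq[OF u(1)])
  have t: "t = 1 \<or> t = -1" unfolding t_def by (rule gunits_sq[OF w(1)])
  have r: "r = 1 \<or> r = -1" unfolding r_def by (rule gunits_sq[OF c(1)])
  define X where "X = u * \<alpha>"
  define Z where "Z = w * \<gamma>"
  have X2: "X^2 = s * \<alpha>^2" unfolding X_def s_def by (simp add: power_mult_distrib)
  have Z2: "Z^2 = t * \<gamma>^2" unfolding Z_def t_def by (simp add: power_mult_distrib)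
  have tt: "t * t = 1" using t by auto
  have ss: "s * s = 1" using s by auto
  have E: "X^2 + s * \<i> * \<beta>^2 + s * t * Z^2 = 0"
  proof -
    have "X^2 + s * \<i> * \<beta>^2 + s * t * Z^2 = s * (\<alpha>^2 + \<i> * \<beta>^2 + (t * t) * \<gamma>^2)"
      unfolding X2 Z2 by (simp add: algebra_simps)
    also have "\<dots> = 0" using eq tt by simp
    finally show ?thesis .
  qed
  have st: "s * t = -1"
  proof (rule ccontr)
    assume "s * t \<noteq> -1"
    then have st1: "s * t = 1" using s t by auto
    have bb: "\<beta>^2 = -4 * \<beta>0^2" using b by (simp add: power2_eq_square algebra_simps complex_eq_iff)
    have "X^2 + Z^2 = 4 * (s * \<i> * \<beta>0^2)" using E st1 bb by (simp add: algebra_simps eq_neg_iff_add_eq_0)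
    then have H: "Re (X^2 + Z^2) = Re (4 * (s * \<i> * \<beta>0^2))" by (simp only:)
    have "Re (X^2) + Re (Z^2) = Re (X^2 + Z^2)" by simp
    also have "\<dots> = Re (4 * (s * \<i> * \<beta>0^2))" by (rule H)
    also have "\<dots> = 4 * Re (s * \<i> * \<beta>0^2)" by simp
    finally have "Re (X^2) + Re (Z^2) = 4 * Re (s * \<i> * \<beta>0^2)" .
    moreover have "gauss (s * \<i> * \<beta>0^2)" using s b(1) by auto
    then obtain m :: int where "Re (s * \<i> * \<beta>0^2) = of_int m" unfolding gauss_def by (auto elim: Ints_cases)
    moreover obtain k1 :: int where "Re (X^2) = of_int (4*k1+1)" using gOI_sq u(2) X_def by blast
    moreover obtain k2 :: int where "Re (Z^2) = of_int (4*k2+1)" using gOI_sq w(2) Z_def by blast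
    ultimately have "of_int (4*k1+1) + of_int (4*k2+1) = (of_int (4*m) :: real)" by simp
    then have "(4*k1+1) + (4*k2+1) = 4*m" by (simp only: of_int_add[symmetric] of_int_eq_iff)
    then show False by presburger
  qed
  have E2: "X^2 + \<i> * (s * \<beta>^2) = Z^2" using E st by (simp add: algebra_simps)
  have gcdg: "gcd_unit \<gamma> \<beta>" using gcd_gamma[OF g eq gc b0] .
  have nzs: "u * \<alpha> * (c * \<beta>) * (w * \<gamma>) \<noteq> 0" "w * \<gamma> * (c * \<beta>) * (u * \<alpha>) \<noteq> 0"
    using a0 b0 c0 gunits_nz u w c by auto
  have Y2: "(c * \<beta>)^2 = r * \<beta>^2" unfolding r_def by (simp add: power_mult_distrib)
  from r s consider "r = s" | "r = - s" by auto
  then show ?thesis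
  proof cases
    case 1
    have eqX: "(u * \<alpha>)\<^sup>2 + \<i> * (c * \<beta>)\<^sup>2 = (w * \<gamma>)\<^sup>2" using E2 Y2 1 X_def Z_def by simp
    show ?thesis
      by (rule finish[OF u(1) c(1) w(1) _ eqX u(2) w(2) Yf gcd_unit_units[OF gc u(1) c(1)] nzs(1)]) simp
  next
    case 2
    have "(w * \<gamma>)\<^sup>2 + \<i> * (c * \<beta>)\<^sup>2 = Z^2 + \<i> * (r * \<beta>^2)" using Z_def Y2 by simp
    also have "\<dots> = Z^2 - \<i> * (s * \<beta>^2)" using 2 by simp
    also have "\<dots> = X^2" by (simp only: E2[symmetric]) simp
    finally have eqX: "(w * \<gamma>)\<^sup>2 + \<i> * (c * \<beta>)\<^sup>2 = (u * \<alpha>)\<^sup>2" using X_def by simp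
    show ?thesis
      by (rule finish[OF w(1) c(1) u(1) _ eqX w(2) u(2) Yf gcd_unit_units[OF gcdg w(1) c(1)] nzs(2)]) simp
  qed
qed


theorem theorem4p9:
  shows "(\<forall>\<alpha> \<beta> \<gamma>.
            gauss \<alpha> \<and> gauss \<beta> \<and> gauss \<gamma> \<and>
            \<alpha>\<^sup>2 + \<i> * \<beta>\<^sup>2 + \<gamma>\<^sup>2 = 0 \<and> \<alpha> * \<beta> * \<gamma> \<noteq> 0 \<and>
            gcd_unit \<alpha> \<beta> \<and> gdvd ((1 + \<i>)\<^sup>2) \<beta> \<longrightarrow>
            (\<exists>u v w \<alpha>' \<gamma>'. u \<in> gunits \<and> v \<in> gunits \<and> w \<in> gunits \<and>
               (\<alpha>', \<gamma>') \<in> {(\<alpha>, \<gamma>), (\<gamma>, \<alpha>)} \<and>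
               (let X = u * \<alpha>'; Y = v * \<beta>; Z = w * \<gamma>' in
                  X\<^sup>2 + \<i> * Y\<^sup>2 = Z\<^sup>2 \<and> X \<in> gOI \<and> Z \<in> gOI \<and>
                  (\<exists>(a1::nat) (P::complex set) (e::complex \<Rightarrow> nat).
                     finite P \<and> (\<forall>p\<in>P. gprime p \<and> p \<in> gOI) \<and>
                     Y = (1 + \<i>) ^ (2 + a1) * (\<Prod>p\<in>P. p ^ e p)) \<and>
                  gcd_unit X Y \<and> X * Y * Z \<noteq> 0)))
       \<and>
       (\<forall>X Y Z.
            gauss X \<and> gauss Y \<and> gauss Z \<and>
            X\<^sup>2 + \<i> * Y\<^sup>2 = Z\<^sup>2 \<and> gcd_unit X Y \<and> X * Y * Z \<noteq> 0 \<longrightarrow>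
            gauss (\<i> * Z) \<and> X\<^sup>2 + \<i> * Y\<^sup>2 + (\<i> * Z)\<^sup>2 = 0 \<and>
            gcd_unit X Y \<and> X * Y * (\<i> * Z) \<noteq> 0)"
  proof (intro conjI allI impI)
  fix \<alpha> \<beta> \<gamma> :: complex
  assume h: "gauss \<alpha> \<and> gauss \<beta> \<and> gauss \<gamma> \<and>
            \<alpha>\<^sup>2 + \<i> * \<beta>\<^sup>2 + \<gamma>\<^sup>2 = 0 \<and> \<alpha> * \<beta> * \<gamma> \<noteq> 0 \<and>
            gcd_unit \<alpha> \<beta> \<and> gdvd ((1 + \<i>)\<^sup>2) \<beta>"
  then show "\<exists>u v w \<alpha>' \<gamma>'. u \<in> gunits \<and> v \<in> gunits \<and> w \<in> gunits \<and>
               (\<alpha>', \<gamma>') \<in> {(\<alpha>, \<gamma>), (\<gamma>, \<alpha>)} \<and>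
               (let X = u * \<alpha>'; Y = v * \<beta>; Z = w * \<gamma>' in
                  X\<^sup>2 + \<i> * Y\<^sup>2 = Z\<^sup>2 \<and> X \<in> gOI \<and> Z \<in> gOI \<and>
                  (\<exists>(a1::nat) (P::complex set) (e::complex \<Rightarrow> nat).
                     finite P \<and> (\<forall>p\<in>P. gprime p \<and> p \<in> gOI) \<and>
                     Y = (1 + \<i>) ^ (2 + a1) * (\<Prod>p\<in>P. p ^ e p)) \<and>
                  gcd_unit X Y \<and> X * Y * Z \<noteq> 0)"
    using part1 by blast
next
  fix X Y Z :: complex
  assume h: "gauss X \<and> gauss Y \<and> gauss Z \<and>
            X\<^sup>2 + \<i> * Y\<^sup>2 = Z\<^sup>2 \<and> gcd_unit X Y \<and> X * Y * Z \<noteq> 0"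
  then show "gauss (\<i> * Z)" by simp
  from h show "X\<^sup>2 + \<i> * Y\<^sup>2 + (\<i> * Z)\<^sup>2 = 0" by (simp add: power_mult_distrib)
  from h show "gcd_unit X Y" by simp
  from h show "X * Y * (\<i> * Z) \<noteq> 0" by simp
qed

end
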